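(* Let $\sigma$ be a finite sequence of transitions. Then $\sigma$ is $\omega$-iterable if and only if for every $n\ge 1$ the $n$-fold concatenation $\sigma^n=\sigma\sigma\cdots\sigma$ has an execution (from some valuation).
   Context: Fix a finite set of clocks $X=\{x_0,x_1,\dots,x_m\}$, where $x_0$ is a special reference clock. A valuation is a map $v:X\to\mathbb{R}_{\ge 0}$ with $v(x_0)=0$. For $\delta\ge 0$, $v+\delta$ is the valuation adding $\delta$ to every clock other than $x_0$; for $R\subseteq X\setminus\{x_0\}$, $[R]v$ sets the clocks of $R$ to $0$ and leaves the others unchanged. A guard is a conjunction of atomic constraints $x\sim c$ with $x\in X\setminus\{x_0\}$, $\sim\in\{<,\le,=,\ge,>\}$, $c\in\mathbb{N}$. A transition $t$ is a pair $(g,R)$ of a guard $g$ and a reset set $R\subseteq X\setminus\{x_0\}$ (control states are omitted). We write $v\xrightarrow{t}^{\delta}v'$ if $v+\delta\models g$ and $v'=[R](v+\delta)$. An execution of a sequence $\sigma=t_1\cdots t_k$ is a sequence of valuations $v_0,\dots,v_k$ such that there are $\delta_1,\dots,\delta_k\ge 0$ with $v_{i-1}\xrightarrow{t_i}^{\delta_i}v_i$ for all $i$; we then write $v_0\xrightarrow{\sigma}^{\delta}v_k$ with $\delta=\sum_i\delta_i$, and say $\sigma$ is executable from $v_0$. The sequence $\sigma$ is $\omega$-iterable (from $v_0$) if there are infinite sequences of valuations $v_0,v_1,\dots$ and delays $\delta_1,\delta_2,\dots$ with $v_0\xrightarrow{\sigma}^{\delta_1}v_1\xrightarrow{\sigma}^{\delta_2}v_2\cdots$.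 *)

theory Defs
  imports Complex_Main
begin

text \<open>Clocks are the elements of a finite type 'c; x0 is the special reference clock.
  Valuations map clocks to reals.\<close>

type_synonym 'c valuation = "'c \<Rightarrow> real"

datatype cmp = Lt | Le | Eq | Ge | Gt

type_synonym 'c atom = "'c \<times> cmp \<times> nat"
type_synonym 'c guard = "'c atom list"

type_synonym 'c trans = "'c guard \<times> 'c set"

definition is_val :: "'c \<Rightarrow> 'c valuation \<Rightarrow> bool" where
  "is_val x0 v \<longleftrightarrow> (\<forall>x. v x \<ge> 0) \<and> v x0 = 0"

fun sat_cmp :: "real \<Rightarrow> cmp \<Rightarrow> real \<Rightarrow> bool" where
  "sat_cmp a Lt b = (a < b)"
| "sat_cmp a Le b = (a \<le> b)"
| "sat_cmp a Eq b = (a = b)"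
| "sat_cmp a Ge b = (a \<ge> b)"
| "sat_cmp a Gt b = (a > b)"

definition sat_atom :: "'c valuation \<Rightarrow> 'c atom \<Rightarrow> bool" where
  "sat_atom v a = (case a of (x, r, c) \<Rightarrow> sat_cmp (v x) r (real c))"

definition sat_guard :: "'c valuation \<Rightarrow> 'c guard \<Rightarrow> bool" where
  "sat_guard v g \<longleftrightarrow> (\<forall>a \<in> set g. sat_atom v a)"

definition wf_trans :: "'c \<Rightarrow> 'c trans \<Rightarrow> bool" where
  "wf_trans x0 t \<longleftrightarrow> (\<forall>(x, r, c) \<in> set (fst t). x \<noteq> x0) \<and> snd t \<subseteq> UNIV - {x0}"

definition delay :: "'c \<Rightarrow> 'c valuation \<Rightarrow> real \<Rightarrow> 'c valuation" where
  "delay x0 v d = (\<lambda>x. if x = x0 then v x else v x + d)"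

definition reset :: "'c set \<Rightarrow> 'c valuation \<Rightarrow> 'c valuation" where
  "reset R v = (\<lambda>x. if x \<in> R then 0 else v x)"

definition step :: "'c \<Rightarrow> 'c valuation \<Rightarrow> 'c trans \<Rightarrow> real \<Rightarrow> 'c valuation \<Rightarrow> bool" where
  "step x0 v t d v' \<longleftrightarrow> d \<ge> 0 \<and> sat_guard (delay x0 v d) (fst t) \<and> v' = reset (snd t) (delay x0 v d)"

fun exec :: "'c \<Rightarrow> 'c valuation \<Rightarrow> 'c trans list \<Rightarrow> 'c valuation \<Rightarrow> bool" where
  "exec x0 v [] v' \<longleftrightarrow> v' = v"
| "exec x0 v (t # ts) v' \<longleftrightarrow> (\<exists>d v1. step x0 v t d v1 \<and> exec x0 v1 ts v')"

definition executable :: "'c \<Rightarrow> 'c trans list \<Rightarrow> 'c valuation \<Rightarrow> bool" where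
  "executable x0 \<sigma> v \<longleftrightarrow> (\<exists>v'. exec x0 v \<sigma> v')"

definition omega_iterable :: "'c \<Rightarrow> 'c trans list \<Rightarrow> 'c valuation \<Rightarrow> bool" where
  "omega_iterable x0 \<sigma> v0 \<longleftrightarrow>
     (\<exists>vs :: nat \<Rightarrow> 'c valuation. vs 0 = v0 \<and> (\<forall>i. exec x0 (vs i) \<sigma> (vs (Suc i))))"

end

theory Submission
  imports Defs "HOL-Library.Infinite_Set"
begin

lemma sep_reals:
  fixes A B :: "real set"
  assumes "finite A" "finite B" "\<forall>a\<in>A. \<forall>b\<in>B. a < b"
  shows "\<exists>x. (\<forall>a\<in>A. a < x) \<and> (\<forall>b\<in>B. x < b)"
proof (cases "A = {}")
  case True
  then show ?thesis
  proof (cases "B = {}")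
    case False
    show ?thesis using True False assms
      by (intro exI[of _ "Min B - 1"]) (auto dest: Min_le[OF assms(2)])
  qed auto
next
  case A: False
  show ?thesis
  proof (cases "B = {}")
    case True
    show ?thesis using True A assms
      by (intro exI[of _ "Max A + 1"]) (auto dest: Max_ge[OF assms(1)])
  next
    case False
    have "Max A < Min B" using assms A False Max_in Min_in by blast
    have "\<forall>a\<in>A. a \<le> Max A" "\<forall>b\<in>B. Min B \<le> b" using assms by auto
    with \<open>Max A < Min B\<close> show ?thesis
      by (intro exI[of _ "(Max A + Min B)/2"]) fastforce
  qed
qed

lemma interp:
  fixes p q :: "'i \<Rightarrow> real"
  assumes fin: "finite I"
    and ord: "\<forall>i\<in>I. \<forall>j\<in>I. (p i < p j \<longleftrightarrow> q i < q j) \<and> (p i \<le> p j \<longleftrightarrow> q i \<le> q j)"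
  shows "\<exists>d'. \<forall>i\<in>I. (d < p i \<longleftrightarrow> d' < q i) \<and> (d \<le> p i \<longleftrightarrow> d' \<le> q i)"
proof (cases "\<exists>k\<in>I. p k = d")
  case True
  then obtain k where k: "k \<in> I" "p k = d" by blast
  have "(d < p i \<longleftrightarrow> q k < q i) \<and> (d \<le> p i \<longleftrightarrow> q k \<le> q i)" if "i \<in> I" for i
    using ord k that by metis
  then show ?thesis by blast
next
  case False
  let ?Lo = "q ` {i\<in>I. p i < d}" and ?U = "q ` {i\<in>I. d < p i}"
  have "a < b" if ab: "a \<in> ?Lo" "b \<in> ?U" for a b
  proof -
    obtain i where i: "i \<in> I" "p i < d" "a = q i" using ab(1) by blast
    obtain j where j: "j \<in> I" "d < p j" "b = q j" using ab(2) by blast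
    have "p i < p j" using i j by linarith
    then show ?thesis using ord i j by blast
  qed
  moreover have "finite ?Lo" "finite ?U" using fin by auto
  ultimately obtain x where x: "\<forall>a\<in>?Lo. a < x" "\<forall>b\<in>?U. x < b"
    using sep_reals[of ?Lo ?U] by blast
  show ?thesis
  proof (intro exI[of _ x] ballI)
    fix i assume i: "i \<in> I"
    then have "p i \<noteq> d" using False by blast
    then consider "p i < d" | "d < p i" by linarith
    then show "(d < p i \<longleftrightarrow> x < q i) \<and> (d \<le> p i \<longleftrightarrow> x \<le> q i)"
    proof cases
      case 1
      then have "q i < x" using x(1) i by blast
      then show ?thesis using 1 by linarith
    next
      case 2
      then have "x < q i" using x(2) i by blast
      then show ?thesis using 2 by linarith
    qed
  qed
qed

definition eqv :: "int \<Rightarrow> 'c valuation \<Rightarrow> 'c valuation \<Rightarrow> bool" where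
  "eqv L v w \<longleftrightarrow> (\<forall>x y c. -L \<le> c \<and> c \<le> L \<longrightarrow>
      (v x - v y < of_int c \<longleftrightarrow> w x - w y < of_int c) \<and> (v x - v y \<le> of_int c \<longleftrightarrow> w x - w y \<le> of_int c))"

definition sig :: "int \<Rightarrow> 'c valuation \<Rightarrow> ('c \<times> 'c \<times> int \<times> bool) set" where
  "sig L v = {(x,y,c,b). -L \<le> c \<and> c \<le> L \<and> (if b then v x - v y < of_int c else v x - v y \<le> of_int c)}"

lemma eqv_sig: "eqv L v w \<longleftrightarrow> sig L v = sig L w"
proof
  assume "eqv L v w" then show "sig L v = sig L w"
    unfolding eqv_def sig_def by auto
next
  assume s: "sig L v = sig L w"
  show "eqv L v w" unfolding eqv_def
  proof (intro allI impI)
    fix x y c assume c: "-L \<le> c \<and> c \<le> L"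
    have 1: "(x,y,c,True) \<in> sig L v \<longleftrightarrow> (x,y,c,True) \<in> sig L w" using s by simp
    have 2: "(x,y,c,False) \<in> sig L v \<longleftrightarrow> (x,y,c,False) \<in> sig L w" using s by simp
    show "(v x - v y < of_int c \<longleftrightarrow> w x - w y < of_int c) \<and> (v x - v y \<le> of_int c \<longleftrightarrow> w x - w y \<le> of_int c)"
      using 1 2 c unfolding sig_def by auto
  qed
qed

lemma finite_sig_range:
  "finite (range (sig L :: ('c::finite) valuation \<Rightarrow> _))"
proof -
  have "range (sig L :: 'c valuation \<Rightarrow> _) \<subseteq> Pow (UNIV \<times> UNIV \<times> {-L..L} \<times> UNIV)"
    unfolding sig_def by auto
  moreover have "finite (Pow (UNIV \<times> UNIV \<times> {-L..L} \<times> (UNIV::bool set) :: ('c \<times> 'c \<times> int \<times> bool) set))"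
    by simp
  ultimately show ?thesis by (rule finite_subset)
qed

lemma pigeon:
  fixes f :: "nat \<Rightarrow> 'a"
  assumes "finite (range f)"
  shows "\<exists>s. \<forall>n. \<exists>m\<ge>n. f m = s"
proof -
  obtain y where "infinite (f -` {y})"
    using inf_img_fin_dom[OF assms infinite_UNIV_nat] by blast
  then show ?thesis unfolding infinite_nat_iff_unbounded_le by auto
qed

lemma delay_sim:
  fixes x0 :: "'c::finite"
  assumes vv: "is_val x0 v" and vw: "is_val x0 w" and e: "eqv L v w" and d: "d \<ge> 0"
  shows "\<exists>d'\<ge>0. eqv L (delay x0 v d) (delay x0 w d')"
proof (cases "L < 0")
  case True
  then show ?thesis unfolding eqv_def by (intro exI[of _ 0]) auto
next
  case L0: False
  define I where "I = {(x,c). c \<in> {0..L} \<and> v x \<le> of_int c}"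
  have finI: "finite I"
  proof -
    have "I \<subseteq> UNIV \<times> {0..L}" unfolding I_def by auto
    then show ?thesis by (rule finite_subset) simp
  qed
  define p where "p = (\<lambda>(x,c). of_int c - v x)"
  define q where "q = (\<lambda>(x,c). of_int c - w x)"
  have v0: "v x0 = 0" "\<And>x. v x \<ge> 0" using vv unfolding is_val_def by auto
  have w0: "w x0 = 0" "\<And>x. w x \<ge> 0" using vw unfolding is_val_def by auto
  have ord: "\<forall>i\<in>I. \<forall>j\<in>I. (p i < p j \<longleftrightarrow> q i < q j) \<and> (p i \<le> p j \<longleftrightarrow> q i \<le> q j)"
  proof (intro ballI)
    fix i j assume i: "i \<in> I" and j: "j \<in> I"
    obtain x c where ic: "i = (x,c)" by (cases i)
    obtain y c' where jc: "j = (y,c')" by (cases j)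
    have cc: "0 \<le> c" "c \<le> L" "0 \<le> c'" "c' \<le> L" using i j ic jc unfolding I_def by auto
    have "-L \<le> c' - c \<and> c' - c \<le> L" using cc by auto
    then have "(v y - v x < of_int (c' - c) \<longleftrightarrow> w y - w x < of_int (c' - c)) \<and>
               (v y - v x \<le> of_int (c' - c) \<longleftrightarrow> w y - w x \<le> of_int (c' - c))"
      using e unfolding eqv_def by blast
    then show "(p i < p j \<longleftrightarrow> q i < q j) \<and> (p i \<le> p j \<longleftrightarrow> q i \<le> q j)"
      unfolding ic jc p_def q_def by auto
  qed
  obtain d' where d': "\<forall>i\<in>I. (d < p i \<longleftrightarrow> d' < q i) \<and> (d \<le> p i \<longleftrightarrow> d' \<le> q i)"
    using interp[OF finI ord] by blast
  have "(x0, 0) \<in> I" unfolding I_def using v0 L0 by auto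
  then have d'0: "d' \<ge> 0" using d' d unfolding p_def q_def using v0 w0 by force
  have single: "(v x + d < of_int c \<longleftrightarrow> w x + d' < of_int c) \<and> (v x + d \<le> of_int c \<longleftrightarrow> w x + d' \<le> of_int c)"
    if c: "-L \<le> c" "c \<le> L" for x c
  proof (cases "c < 0")
    case True
    then show ?thesis using v0(2)[of x] w0(2)[of x] d d'0 by (smt (verit) of_int_less_0_iff)
  next
    case c0: False
    show ?thesis
    proof (cases "v x \<le> of_int c")
      case True
      then have "(x,c) \<in> I" unfolding I_def using c c0 by auto
      then show ?thesis using d' unfolding p_def q_def by auto
    next
      case False
      have "(v x - v x0 \<le> of_int c \<longleftrightarrow> w x - w x0 \<le> of_int c)" using e c unfolding eqv_def by blast
      then have "\<not> w x \<le> of_int c" using False v0 w0 by simp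
      then show ?thesis using False d d'0 by auto
    qed
  qed
  have "eqv L (delay x0 v d) (delay x0 w d')"
    unfolding eqv_def
  proof (intro allI impI)
    fix x y c assume c: "-L \<le> c \<and> c \<le> L"
    show "(delay x0 v d x - delay x0 v d y < of_int c \<longleftrightarrow> delay x0 w d' x - delay x0 w d' y < of_int c) \<and>
          (delay x0 v d x - delay x0 v d y \<le> of_int c \<longleftrightarrow> delay x0 w d' x - delay x0 w d' y \<le> of_int c)"
    proof (cases "x = x0")
      case True
      show ?thesis
      proof (cases "y = x0")
        case True
        then show ?thesis using \<open>x = x0\<close> by (simp add: delay_def)
      next
        case False
        have "-L \<le> -c" "-c \<le> L" using c by auto
        from single[OF this, of y] show ?thesis using \<open>x = x0\<close> False v0 w0
          by (auto simp: delay_def)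
      qed
    next
      case xn: False
      show ?thesis
      proof (cases "y = x0")
        case True
        from single[of c x] show ?thesis using c xn True v0 w0 by (auto simp: delay_def)
      next
        case False
        then show ?thesis using xn e c unfolding eqv_def by (auto simp: delay_def)
      qed
    qed
  qed
  then show ?thesis using d'0 by blast
qed

lemma reset_comp: "v x0 = 0 \<Longrightarrow> x0 \<notin> R \<Longrightarrow> reset R v = v \<circ> (\<lambda>x. if x \<in> R then x0 else x)"
  by (auto simp: reset_def)

lemma reset_eqv:
  assumes "eqv L v w" "v x0 = 0" "w x0 = 0" "x0 \<notin> R"
  shows "eqv L (reset R v) (reset R w)"
  using assms unfolding reset_comp[of v x0 R, OF assms(2,4)] reset_comp[of w x0 R, OF assms(3,4)] eqv_def by simp

lemma delay_val: "is_val x0 v \<Longrightarrow> d \<ge> 0 \<Longrightarrow> is_val x0 (delay x0 v d)"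
  unfolding is_val_def delay_def by (auto intro: add_nonneg_nonneg)

lemma step_val: "is_val x0 v \<Longrightarrow> wf_trans x0 t \<Longrightarrow> step x0 v t d v' \<Longrightarrow> is_val x0 v'"
  unfolding step_def wf_trans_def is_val_def reset_def delay_def
  by (auto intro: add_nonneg_nonneg)

lemma guard_eqv:
  assumes e: "eqv L v w" "v x0 = 0" "w x0 = 0"
    and g: "\<forall>(x,r,c)\<in>set g. x \<noteq> x0 \<and> int c \<le> L"
  shows "sat_guard v g \<longleftrightarrow> sat_guard w g"
proof -
  have "sat_atom v a \<longleftrightarrow> sat_atom w a" if a: "a \<in> set g" for a
  proof -
    obtain x r c where ac: "a = (x,r,c)" by (cases a) auto
    have c: "-L \<le> int c \<and> int c \<le> L" using g a ac by auto
    have "(v x - v x0 < of_int (int c) \<longleftrightarrow> w x - w x0 < of_int (int c)) \<and>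
          (v x - v x0 \<le> of_int (int c) \<longleftrightarrow> w x - w x0 \<le> of_int (int c))"
      using e(1) c unfolding eqv_def by blast
    then have "(v x < real c \<longleftrightarrow> w x < real c) \<and> (v x \<le> real c \<longleftrightarrow> w x \<le> real c)"
      using e by simp
    then show ?thesis unfolding ac sat_atom_def by (cases r) auto
  qed
  then show ?thesis unfolding sat_guard_def by blast
qed

definition bnd :: "'c \<Rightarrow> int \<Rightarrow> 'c trans \<Rightarrow> bool" where
  "bnd x0 L t \<longleftrightarrow> wf_trans x0 t \<and> (\<forall>(x,r,c)\<in>set (fst t). int c \<le> L)"

lemma step_sim:
  fixes x0 :: "'c::finite"
  assumes "is_val x0 v" "is_val x0 w" "eqv L v w" "bnd x0 L t" "step x0 v t d v'"
  shows "\<exists>d' w'. step x0 w t d' w' \<and> eqv L v' w'"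
proof -
  have d: "d \<ge> 0" using assms(5) unfolding step_def by simp
  obtain d' where d': "d' \<ge> 0" "eqv L (delay x0 v d) (delay x0 w d')"
    using delay_sim[OF assms(1-3) d] by blast
  have vd: "is_val x0 (delay x0 v d)" "is_val x0 (delay x0 w d')"
    using assms(1,2) d d'(1) by (auto intro: delay_val)
  have g: "\<forall>(x,r,c)\<in>set (fst t). x \<noteq> x0 \<and> int c \<le> L"
    using assms(4) unfolding bnd_def wf_trans_def by fast
  have gs: "sat_guard (delay x0 w d') (fst t)"
    using guard_eqv[OF d'(2) _ _ g] vd assms(5) unfolding is_val_def step_def by auto
  have "x0 \<notin> snd t" using assms(4) unfolding bnd_def wf_trans_def by auto
  then have "eqv L v' (reset (snd t) (delay x0 w d'))"
    using reset_eqv[OF d'(2)] vd assms(5) unfolding is_val_def step_def by auto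
  then show ?thesis using gs d'(1) unfolding step_def by blast
qed

lemma exec_sim:
  fixes x0 :: "'c::finite"
  assumes "\<forall>t\<in>set ts. bnd x0 L t"
  shows "is_val x0 v \<Longrightarrow> is_val x0 w \<Longrightarrow> eqv L v w \<Longrightarrow> exec x0 v ts v' \<Longrightarrow>
    \<exists>w'. exec x0 w ts w' \<and> eqv L v' w' \<and> is_val x0 v' \<and> is_val x0 w'"
  using assms
proof (induction ts arbitrary: v w)
  case Nil
  then show ?case by auto
next
  case (Cons t ts)
  obtain d v1 where s: "step x0 v t d v1" "exec x0 v1 ts v'" using Cons.prems by auto
  obtain d' w1 where s': "step x0 w t d' w1" "eqv L v1 w1"
    using step_sim[OF Cons.prems(1-3) _ s(1)] Cons.prems(5) by auto
  have wf: "wf_trans x0 t" using Cons.prems(5) unfolding bnd_def by auto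
  have iv: "is_val x0 v1" using step_val[OF Cons.prems(1) wf s(1)] .
  have iw: "is_val x0 w1" using step_val[OF Cons.prems(2) wf s'(1)] .
  from Cons.IH[OF iv iw s'(2) s(2)] Cons.prems(5) obtain w' where
    "exec x0 w1 ts w'" "eqv L v' w'" "is_val x0 v'" "is_val x0 w'" by auto
  then show ?case using s'(1) by auto
qed

lemma exec_val:
  "\<forall>t\<in>set ts. wf_trans x0 t \<Longrightarrow> is_val x0 v \<Longrightarrow> exec x0 v ts v' \<Longrightarrow> is_val x0 v'"
proof (induction ts arbitrary: v)
  case Nil then show ?case by simp
next
  case (Cons t ts)
  obtain d v1 where s: "step x0 v t d v1" "exec x0 v1 ts v'" using Cons.prems(3) by auto
  have "is_val x0 v1" using step_val[OF Cons.prems(2) _ s(1)] Cons.prems(1) by simp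
  then show ?case using Cons.IH Cons.prems(1) s(2) by simp
qed

lemma exec_append:
  "exec x0 v (xs @ ys) v'' \<longleftrightarrow> (\<exists>v'. exec x0 v xs v' \<and> exec x0 v' ys v'')"
  by (induction xs arbitrary: v) auto

lemma exec_prefix:
  assumes "executable x0 (concat (replicate m \<sigma>)) v" "n \<le> m"
  shows "executable x0 (concat (replicate n \<sigma>)) v"
proof -
  have "replicate m \<sigma> = replicate n \<sigma> @ replicate (m - n) \<sigma>"
    using assms(2) by (simp add: replicate_add[symmetric])
  then show ?thesis using assms(1) unfolding executable_def by (auto simp: exec_append)
qed

lemma forward:
  assumes "\<forall>i. exec x0 (vs i) \<sigma> (vs (Suc i))"
  shows "exec x0 (vs i) (concat (replicate n \<sigma>)) (vs (i + n))"
  using assms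
proof (induction n arbitrary: i)
  case 0 then show ?case by simp
next
  case (Suc n)
  have "exec x0 (vs (Suc i)) (concat (replicate n \<sigma>)) (vs (Suc i + n))" using Suc by blast
  then show ?case using Suc.prems by (auto simp: exec_append)
qed

theorem lemma1:
  fixes x0 :: "'c::finite" and \<sigma> :: "'c trans list"
  assumes "\<forall>t \<in> set \<sigma>. wf_trans x0 t"
  shows "(\<exists>v0. is_val x0 v0 \<and> omega_iterable x0 \<sigma> v0) \<longleftrightarrow>
         (\<forall>n::nat. n \<ge> 1 \<longrightarrow> (\<exists>v. is_val x0 v \<and> executable x0 (concat (replicate n \<sigma>)) v))"
proof
  assume "\<exists>v0. is_val x0 v0 \<and> omega_iterable x0 \<sigma> v0"
  then obtain v0 vs where "is_val x0 v0" "vs 0 = v0" "\<forall>i. exec x0 (vs i) \<sigma> (vs (Suc i))"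
    unfolding omega_iterable_def by blast
  then show "\<forall>n::nat. n \<ge> 1 \<longrightarrow> (\<exists>v. is_val x0 v \<and> executable x0 (concat (replicate n \<sigma>)) v)"
  proof (intro allI impI)
    fix n :: nat
    have "exec x0 (vs 0) (concat (replicate n \<sigma>)) (vs (0 + n))"
      by (rule forward) fact
    then show "\<exists>v. is_val x0 v \<and> executable x0 (concat (replicate n \<sigma>)) v"
      using \<open>is_val x0 v0\<close> \<open>vs 0 = v0\<close> unfolding executable_def by auto
  qed
next
  assume H: "\<forall>n::nat. n \<ge> 1 \<longrightarrow> (\<exists>v. is_val x0 v \<and> executable x0 (concat (replicate n \<sigma>)) v)"
  define cs where "cs = concat (map (\<lambda>t. map (\<lambda>a. snd (snd a)) (fst t)) \<sigma>)"
  define L where "L = int (Max (insert 0 (set cs)))"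
  have bnd: "\<forall>t\<in>set \<sigma>. bnd x0 L t"
  proof
    fix t assume t: "t \<in> set \<sigma>"
    have "int c \<le> L" if "(x,r,c) \<in> set (fst t)" for x r c
    proof -
      have "c \<in> set cs" unfolding cs_def using t that by force
      then show ?thesis unfolding L_def by simp
    qed
    then show "bnd x0 L t" using assms t unfolding bnd_def by auto
  qed
  define E where "E = (\<lambda>n v. is_val x0 v \<and> executable x0 (concat (replicate n \<sigma>)) v)"
  have Eall: "\<exists>v. E n v" for n
  proof -
    have "(1::nat) \<le> Suc n" by simp
    then obtain v where "is_val x0 v" and ex1: "executable x0 (concat (replicate (Suc n) \<sigma>)) v"
      using H by blast
    have "executable x0 (concat (replicate n \<sigma>)) v" by (rule exec_prefix[OF ex1]) simp
    then show ?thesis unfolding E_def using \<open>is_val x0 v\<close> by blast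
  qed
  have Emono: "E n v" if "E m v" "n \<le> m" for m n v
    using that exec_prefix[of x0 m \<sigma> v n] unfolding E_def by blast
  define good where "good = (\<lambda>s. \<forall>n. \<exists>v. E n v \<and> sig L v = s)"
  have fr: "finite (range f)" if "\<And>n. f n \<in> range (sig L :: 'c valuation \<Rightarrow> _)" for f :: "nat \<Rightarrow> _"
  proof -
    have "range f \<subseteq> range (sig L :: 'c valuation \<Rightarrow> _)" using that by blast
    then show ?thesis using finite_sig_range[of L] by (rule finite_subset)
  qed
  have good0: "\<exists>s. good s"
  proof -
    define vn where "vn = (\<lambda>n. SOME v. E n v)"
    have vn: "E n (vn n)" for n unfolding vn_def using someI_ex[OF Eall] .
    obtain s where s: "\<forall>n. \<exists>m\<ge>n. sig L (vn m) = s"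
      using pigeon[OF fr[of "\<lambda>n. sig L (vn n)"]] by auto
    have "good s" unfolding good_def
    proof
      fix n obtain m where "m \<ge> n" "sig L (vn m) = s" using s by blast
      then show "\<exists>v. E n v \<and> sig L v = s" using vn[of m] Emono[of m "vn m" n] by blast
    qed
    then show ?thesis by blast
  qed
  have nxt: "\<exists>s'. good s' \<and> (\<forall>v. is_val x0 v \<and> sig L v = s \<longrightarrow>
               (\<exists>v'. exec x0 v \<sigma> v' \<and> is_val x0 v' \<and> sig L v' = s'))" if gs: "good s" for s
  proof -
    have ex: "\<exists>p. E (Suc n) (fst p) \<and> sig L (fst p) = s \<and> exec x0 (fst p) \<sigma> (snd p) \<and> E n (snd p)" for n
    proof -
      obtain v where v: "E (Suc n) v" "sig L v = s" using gs unfolding good_def by blast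
      then obtain w where "exec x0 v (\<sigma> @ concat (replicate n \<sigma>)) w"
        unfolding E_def executable_def by auto
      then obtain u where "exec x0 v \<sigma> u" "exec x0 u (concat (replicate n \<sigma>)) w"
        unfolding exec_append by blast
      then have "exec x0 v \<sigma> u" "executable x0 (concat (replicate n \<sigma>)) u"
        unfolding executable_def by blast+
      moreover have "is_val x0 u" using exec_val[OF assms] v calculation(1) unfolding E_def by blast
      ultimately have "E (Suc n) v \<and> sig L v = s \<and> exec x0 v \<sigma> u \<and> E n u" using v unfolding E_def by blast
      then show ?thesis by (intro exI[of _ "(v,u)"]) simp
    qed
    define P where "P = (\<lambda>n. SOME p. E (Suc n) (fst p) \<and> sig L (fst p) = s \<and> exec x0 (fst p) \<sigma> (snd p) \<and> E n (snd p))"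
    define vv where "vv = (\<lambda>n. fst (P n))"
    define uu where "uu = (\<lambda>n. snd (P n))"
    have vu: "E (Suc n) (vv n) \<and> sig L (vv n) = s \<and> exec x0 (vv n) \<sigma> (uu n) \<and> E n (uu n)" for n
      unfolding vv_def uu_def P_def using someI_ex[OF ex[of n]] .
    obtain s' where s': "\<forall>n. \<exists>m\<ge>n. sig L (uu m) = s'"
      using pigeon[OF fr[of "\<lambda>n. sig L (uu n)"]] by auto
    have "good s'" unfolding good_def
    proof
      fix n obtain m where "m \<ge> n" "sig L (uu m) = s'" using s' by blast
      then show "\<exists>v. E n v \<and> sig L v = s'" using vu[of m] Emono[of m "uu m" n] by blast
    qed
    moreover have "\<exists>v'. exec x0 v \<sigma> v' \<and> is_val x0 v' \<and> sig L v' = s'"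
      if v: "is_val x0 v" "sig L v = s" for v
    proof -
      obtain m where m: "sig L (uu m) = s'" using s' by blast
      have "eqv L (vv m) v" using vu[of m] v eqv_sig by metis
      moreover have "is_val x0 (vv m)" using vu[of m] unfolding E_def by blast
      ultimately obtain v' where "exec x0 v \<sigma> v'" "eqv L (uu m) v'" "is_val x0 v'"
        using exec_sim[OF bnd _ v(1)] vu[of m] by blast
      then show ?thesis using m eqv_sig by metis
    qed
    ultimately show ?thesis by blast
  qed
  define N where "N = (\<lambda>s. SOME s'. good s' \<and> (\<forall>v. is_val x0 v \<and> sig L v = s \<longrightarrow>
               (\<exists>v'. exec x0 v \<sigma> v' \<and> is_val x0 v' \<and> sig L v' = s')))"
  have N: "good (N s) \<and> (\<forall>v. is_val x0 v \<and> sig L v = s \<longrightarrow>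
               (\<exists>v'. exec x0 v \<sigma> v' \<and> is_val x0 v' \<and> sig L v' = N s))" if "good s" for s
    unfolding N_def using someI_ex[OF nxt[OF that]] .
  obtain s0 where s0: "good s0" using good0 by blast
  define ss where "ss = (\<lambda>n. (N ^^ n) s0)"
  have gss: "good (ss n)" for n
  proof (induction n)
    case 0 show ?case using s0 by (simp add: ss_def)
  next
    case (Suc n)
    have "good (N (ss n))" using N[OF Suc.IH] by blast
    then show ?case by (simp add: ss_def)
  qed
  obtain v0 where v0: "is_val x0 v0" "sig L v0 = ss 0"
    using s0 unfolding good_def E_def ss_def by auto
  define vs where "vs = rec_nat v0 (\<lambda>i v. SOME v'. exec x0 v \<sigma> v' \<and> is_val x0 v' \<and> sig L v' = ss (Suc i))"
  have vs0: "vs 0 = v0" unfolding vs_def by simp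
  have vsS: "vs (Suc i) = (SOME v'. exec x0 (vs i) \<sigma> v' \<and> is_val x0 v' \<and> sig L v' = ss (Suc i))" for i
    unfolding vs_def by simp
  have inv: "is_val x0 (vs i) \<and> sig L (vs i) = ss i \<and> exec x0 (vs i) \<sigma> (vs (Suc i))" for i
  proof (induction i)
    case 0
    have A0: "\<exists>v'. exec x0 (vs 0) \<sigma> v' \<and> is_val x0 v' \<and> sig L v' = ss (Suc 0)"
      using N[OF gss[of 0]] v0 vs0 by (simp add: ss_def)
    show ?case using someI_ex[OF A0] vsS[of 0] v0 vs0 by simp
  next
    case (Suc i)
    have A: "\<exists>v'. exec x0 (vs i) \<sigma> v' \<and> is_val x0 v' \<and> sig L v' = ss (Suc i)"
      using N[OF gss[of i]] Suc by (simp add: ss_def)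
    have B: "is_val x0 (vs (Suc i)) \<and> sig L (vs (Suc i)) = ss (Suc i)"
      using someI_ex[OF A] vsS[of i] by simp
    have C: "\<exists>v'. exec x0 (vs (Suc i)) \<sigma> v' \<and> is_val x0 v' \<and> sig L v' = ss (Suc (Suc i))"
      using N[OF gss[of "Suc i"]] B by (simp add: ss_def)
    show ?case using someI_ex[OF C] vsS[of "Suc i"] B by simp
  qed
  show "\<exists>v0. is_val x0 v0 \<and> omega_iterable x0 \<sigma> v0"
    unfolding omega_iterable_def using inv vs0 v0 by blast
qed

end
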